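(* Let $\mathcal{H}$ be a complex Hilbert space and let $T\in\mathcal{B}(\mathcal{H})$ be a concave operator such that $\Delta_T$ has rank one. Then $T$ is a $\Delta_T$-regular completely hyperexpansive operator and its Cauchy dual $T'=T(T^*T)^{-1}$ is a subnormal contraction.
   Context: $\Delta_T=T^*T-I$. $T$ is concave if $T^{*2}T^2-2T^*T+I\le0$ (then $T$ is left invertible). $T$ is $\Delta_T$-regular if $\Delta_TT=\Delta_T^{1/2}T\Delta_T^{1/2}$; completely hyperexpansive if $\sum_{j=0}^n(-1)^j\binom{n}{j}T^{*j}T^j\le0$ for all $n\ge1$. Subnormal means being the restriction of a normal operator to an invariant subspace. *)

theory Defs
  imports "HOL-Analysis.Analysis"
begin

class complex_inner = real_normed_vector +
  fixes cscale :: "complex \<Rightarrow> 'a \<Rightarrow> 'a"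
    and cinner :: "'a \<Rightarrow> 'a \<Rightarrow> complex"
  assumes cscale_of_real: "cscale (complex_of_real r) x = r *\<^sub>R x"
    and cscale_add_right: "cscale a (x + y) = cscale a x + cscale a y"
    and cscale_add_left: "cscale (a + b) x = cscale a x + cscale b x"
    and cscale_cscale: "cscale a (cscale b x) = cscale (a * b) x"
    and cinner_commute: "cinner x y = cnj (cinner y x)"
    and cinner_add_right: "cinner x (y + z) = cinner x y + cinner x z"
    and cinner_cscale_right: "cinner x (cscale a y) = a * cinner x y"
    and cinner_ge_zero: "0 \<le> Re (cinner x x)"
    and cinner_eq_zero_iff: "cinner x x = 0 \<longleftrightarrow> x = 0"
    and norm_eq_sqrt_cinner: "norm x = sqrt (Re (cinner x x))"

class chilbert = complex_inner + complete_space

definition bounded_clinear :: "('a::complex_inner \<Rightarrow> 'b::complex_inner) \<Rightarrow> bool" where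
  "bounded_clinear T \<longleftrightarrow>
     (\<forall>x y. T (x + y) = T x + T y) \<and> (\<forall>c x. T (cscale c x) = cscale c (T x)) \<and>
     (\<exists>K. \<forall>x. norm (T x) \<le> norm x * K)"

definition cadj :: "('a::complex_inner \<Rightarrow> 'a) \<Rightarrow> 'a \<Rightarrow> 'a" where
  "cadj T = (THE S. \<forall>x y. cinner (T x) y = cinner x (S y))"

definition opos :: "('a::complex_inner \<Rightarrow> 'a) \<Rightarrow> bool" where
  "opos A \<longleftrightarrow> (\<forall>x. Im (cinner x (A x)) = 0 \<and> 0 \<le> Re (cinner x (A x)))"

definition oneg :: "('a::complex_inner \<Rightarrow> 'a) \<Rightarrow> bool" where
  "oneg A \<longleftrightarrow> opos (\<lambda>x. - A x)"

definition osqrt :: "('a::complex_inner \<Rightarrow> 'a) \<Rightarrow> 'a \<Rightarrow> 'a" where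
  "osqrt A = (THE S. bounded_clinear S \<and> opos S \<and> (\<forall>x. S (S x) = A x))"

definition Delta :: "('a::complex_inner \<Rightarrow> 'a) \<Rightarrow> 'a \<Rightarrow> 'a" where
  "Delta T = (\<lambda>x. cadj T (T x) - x)"

definition rank_one :: "('a::complex_inner \<Rightarrow> 'a) \<Rightarrow> bool" where
  "rank_one A \<longleftrightarrow> (\<exists>e. e \<noteq> 0 \<and> range A = {cscale c e | c. True})"

definition concave_op :: "('a::complex_inner \<Rightarrow> 'a) \<Rightarrow> bool" where
  "concave_op T \<longleftrightarrow>
     oneg (\<lambda>x. cadj T (cadj T (T (T x))) - 2 *\<^sub>R cadj T (T x) + x)"

definition Delta_regular :: "('a::complex_inner \<Rightarrow> 'a) \<Rightarrow> bool" where
  "Delta_regular T \<longleftrightarrow>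
     (\<forall>x. Delta T (T x) = osqrt (Delta T) (T (osqrt (Delta T) x)))"

definition completely_hyperexpansive :: "('a::complex_inner \<Rightarrow> 'a) \<Rightarrow> bool" where
  "completely_hyperexpansive T \<longleftrightarrow>
     (\<forall>n::nat. n \<ge> 1 \<longrightarrow>
        oneg (\<lambda>x. \<Sum>j = 0..n. ((-1) ^ j * real (n choose j)) *\<^sub>R
                                 ((cadj T ^^ j) ((T ^^ j) x))))"

definition cauchy_dual :: "('a::complex_inner \<Rightarrow> 'a) \<Rightarrow> 'a \<Rightarrow> 'a" where
  "cauchy_dual T = T \<circ> inv (\<lambda>x. cadj T (T x))"

definition contraction :: "('a::complex_inner \<Rightarrow> 'a) \<Rightarrow> bool" where
  "contraction T \<longleftrightarrow> (\<forall>x. norm (T x) \<le> norm x)"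

text \<open>The Hilbert space \<open>\<ell>^2(\<nat>, H)\<close> (countable orthogonal sum of copies of \<open>H\<close>),
  represented as a set of sequences, with pointwise operations.\<close>

definition l2 :: "(nat \<Rightarrow> 'a::complex_inner) set" where
  "l2 = {f. summable (\<lambda>n. (norm (f n))\<^sup>2)}"

definition l2inner :: "(nat \<Rightarrow> 'a::complex_inner) \<Rightarrow> (nat \<Rightarrow> 'a) \<Rightarrow> complex" where
  "l2inner f g = (\<Sum>n. cinner (f n) (g n))"

definition l2norm :: "(nat \<Rightarrow> 'a::complex_inner) \<Rightarrow> real" where
  "l2norm f = sqrt (\<Sum>n. (norm (f n))\<^sup>2)"

definition normal_l2 :: "((nat \<Rightarrow> 'a::complex_inner) \<Rightarrow> (nat \<Rightarrow> 'a)) \<Rightarrow> bool" where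
  "normal_l2 N \<longleftrightarrow>
     (\<forall>f\<in>l2. N f \<in> l2) \<and>
     (\<forall>f\<in>l2. \<forall>g\<in>l2. N (\<lambda>n. f n + g n) = (\<lambda>n. N f n + N g n)) \<and>
     (\<forall>f\<in>l2. \<forall>c. N (\<lambda>n. cscale c (f n)) = (\<lambda>n. cscale c (N f n))) \<and>
     (\<exists>K. \<forall>f\<in>l2. l2norm (N f) \<le> K * l2norm f) \<and>
     (\<exists>M. (\<forall>g\<in>l2. M g \<in> l2) \<and>
          (\<forall>f\<in>l2. \<forall>g\<in>l2. l2inner (N f) g = l2inner f (M g)) \<and>
          (\<forall>f\<in>l2. M (N f) = N (M f)))"

text \<open>\<open>T\<close> is subnormal: it is (unitarily equivalent to) the restriction of a normal
  operator \<open>N\<close> to an invariant subspace, namely the image of an isometric embedding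
  \<open>J : H \<rightarrow> \<ell>^2(\<nat>, H)\<close> with \<open>N J = J T\<close>. Since any minimal normal extension of an
  operator on \<open>H\<close> lives on a space of Hilbert dimension at most that of
  \<open>\<ell>^2(\<nat>, H)\<close>, this is equivalent to the existence of a normal extension on
  some Hilbert space.\<close>
definition subnormal :: "('a::complex_inner \<Rightarrow> 'a) \<Rightarrow> bool" where
  "subnormal T \<longleftrightarrow>
     (\<exists>N (J :: 'a \<Rightarrow> nat \<Rightarrow> 'a). normal_l2 N \<and>
        (\<forall>x. J x \<in> l2) \<and>
        (\<forall>x y. J (x + y) = (\<lambda>n. J x n + J y n)) \<and>
        (\<forall>c x. J (cscale c x) = (\<lambda>n. cscale c (J x n))) \<and>
        (\<forall>x y. l2inner (J x) (J y) = cinner x y) \<and>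
        (\<forall>x. N (J x) = J (T x)))"

end

theory Submission
  imports Defs
begin

declare [[show_types=false]]

lemma cscale_zero_left[simp]: "cscale 0 (x::'a::complex_inner) = 0"
  using cscale_of_real[of 0 x] by simp

lemma cscale_one[simp]: "cscale 1 (x::'a::complex_inner) = x"
  using cscale_of_real[of 1 x] by simp

lemma cscale_zero_right[simp]: "cscale a (0::'a::complex_inner) = 0"
  using cscale_add_right[of a 0 0] by simp

lemma cscale_minus_right: "cscale a (- (x::'a::complex_inner)) = - cscale a x"
  using cscale_add_right[of a x "-x"] by (simp add: eq_neg_iff_add_eq_0 add.commute)

lemma cscale_diff_right: "cscale a ((x::'a::complex_inner) - y) = cscale a x - cscale a y"
  using cscale_add_right[of a x "-y"] by (simp add: cscale_minus_right)

lemma cscale_minus_left: "cscale (- a) (x::'a::complex_inner) = - cscale a x"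
  using cscale_add_left[of a "-a" x] by (simp add: eq_neg_iff_add_eq_0 add.commute)

lemma cscale_diff_left: "cscale (a - b) (x::'a::complex_inner) = cscale a x - cscale b x"
  using cscale_add_left[of a "-b" x] by (simp add: cscale_minus_left)

lemma scaleR_cscale: "r *\<^sub>R (x::'a::complex_inner) = cscale (complex_of_real r) x"
  by (simp add: cscale_of_real)

lemma cinner_add_left: "cinner ((x::'a::complex_inner) + y) z = cinner x z + cinner y z"
  by (metis cinner_add_right cinner_commute complex_cnj_add)

lemma cinner_cscale_left: "cinner (cscale a (x::'a::complex_inner)) y = cnj a * cinner x y"
  by (metis cinner_cscale_right cinner_commute complex_cnj_mult)

lemma cinner_zero_right[simp]: "cinner (x::'a::complex_inner) 0 = 0"
  using cinner_add_right[of x 0 0] by simp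

lemma cinner_zero_left[simp]: "cinner 0 (x::'a::complex_inner) = 0"
  using cinner_add_left[of 0 0 x] by simp

lemma cinner_minus_right: "cinner (x::'a::complex_inner) (- y) = - cinner x y"
  using cinner_add_right[of x y "-y"] by (simp add: eq_neg_iff_add_eq_0 add.commute)

lemma cinner_minus_left: "cinner (- (x::'a::complex_inner)) y = - cinner x y"
  using cinner_add_left[of x "-x" y] by (simp add: eq_neg_iff_add_eq_0 add.commute)

lemma cinner_diff_right: "cinner (x::'a::complex_inner) (y - z) = cinner x y - cinner x z"
  using cinner_add_right[of x y "-z"] by (simp add: cinner_minus_right)

lemma cinner_diff_left: "cinner ((x::'a::complex_inner) - y) z = cinner x z - cinner y z"
  using cinner_add_left[of x "-y" z] by (simp add: cinner_minus_left)

lemma cinner_scaleR_right: "cinner (x::'a::complex_inner) (r *\<^sub>R y) = complex_of_real r * cinner x y"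
  by (simp add: scaleR_cscale cinner_cscale_right)

lemma cinner_scaleR_left: "cinner (r *\<^sub>R (x::'a::complex_inner)) y = complex_of_real r * cinner x y"
  by (simp add: scaleR_cscale cinner_cscale_left)

lemma cinner_self_real: "Im (cinner (x::'a::complex_inner) x) = 0"
proof -
  have "Im (cinner x x) = Im (cnj (cinner x x))" using cinner_commute[of x x] by simp
  then show ?thesis by simp
qed


lemma cinner_self: "cinner (x::'a::complex_inner) x = complex_of_real ((norm x)^2)"
proof -
  have "(norm x)^2 = Re (cinner x x)"
    using norm_eq_sqrt_cinner[of x] cinner_ge_zero[of x] by simp
  then show ?thesis using cinner_self_real[of x] by (simp add: complex_eq_iff)
qed

lemma norm_sq_Re: "(norm (x::'a::complex_inner))^2 = Re (cinner x x)"
  by (simp add: cinner_self)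

lemma cinner_eq0I: "(\<And>z. cinner z (a::'a::complex_inner) = 0) \<Longrightarrow> a = 0"
  using cinner_eq_zero_iff by blast

lemma cinner_ext: "(\<And>z. cinner z (a::'a::complex_inner) = cinner z b) \<Longrightarrow> a = b"
  using cinner_eq0I[of "a - b"] by (simp add: cinner_diff_right)

lemma Re_cnj_mult: "Re (cnj t * cnj a) = Re (t * a)"
  by simp

lemma norm_add_cscale_sq:
  "(norm ((x::'a::complex_inner) + cscale t y))^2
     = (norm x)^2 + 2 * Re (t * cinner x y) + (cmod t)^2 * (norm y)^2"
proof -
  have "cinner (x + cscale t y) (x + cscale t y)
      = cinner x x + t * cinner x y + cnj t * cinner y x + cnj t * t * cinner y y"
    by (simp add: cinner_add_left cinner_add_right cinner_cscale_left cinner_cscale_right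
        algebra_simps)
  moreover have "Re (cnj t * cinner y x) = Re (t * cinner x y)"
    unfolding cinner_commute[of y x] by (rule Re_cnj_mult)
  moreover have "cnj t * t = complex_of_real ((cmod t)^2)"
    by (metis complex_norm_square mult.commute)
  ultimately have "Re (cinner (x + cscale t y) (x + cscale t y))
     = (norm x)^2 + 2 * Re (t * cinner x y) + (cmod t)^2 * (norm y)^2"
    by (simp add: cinner_self)
  then show ?thesis by (simp only: norm_sq_Re)
qed

lemma cauchy_schwarz: "cmod (cinner (x::'a::complex_inner) y) \<le> norm x * norm y"
proof (cases "y = 0")
  case True then show ?thesis by simp
next
  case False
  define a where "a = cinner x y"
  define n where "n = (norm y)^2"
  have n: "n > 0" using False by (simp add: n_def)
  define t where "t = - cnj a / complex_of_real n"
  have e1: "(norm (x + cscale t y))^2 = (norm x)^2 + 2 * Re (t * a) + (cmod t)^2 * n"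
    unfolding a_def n_def by (rule norm_add_cscale_sq)
  have aa: "cnj a * a = complex_of_real ((cmod a)^2)"
    by (metis complex_norm_square mult.commute)
  have e2: "t * a = - (cnj a * a) / complex_of_real n" unfolding t_def by (simp only: times_divide_eq_left mult_minus_left)
  have e3': "- complex_of_real ((cmod a)^2) / complex_of_real n = complex_of_real (- ((cmod a)^2 / n))"
    by simp
  have e3: "Re (t * a) = - ((cmod a)^2 / n)" unfolding e2 aa e3' Re_complex_of_real ..
  have e4: "(cmod t)^2 = (cmod a)^2 / n^2"
    using n by (simp add: t_def norm_divide power_divide)
  have e5: "(cmod a)^2 / n^2 * n = (cmod a)^2 / n" using n by (simp add: power2_eq_square)
  have e6: "(cmod t)^2 * n = (cmod a)^2 / n" using e4 e5 by simp
  have "0 \<le> (norm x)^2 - (cmod a)^2 / n"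
    using e1 e3 e4 e5 e6 zero_le_power2[of "norm (x + cscale t y)"] by linarith
  then have "(cmod a)^2 \<le> (norm x)^2 * n" using n by (simp add: field_simps)
  then have "(cmod a)^2 \<le> (norm x * norm y)^2" by (simp add: n_def power_mult_distrib)
  then show ?thesis unfolding a_def
    by (rule power2_le_imp_le) simp
qed


lemma parallelogram:
  "(norm ((a::'a::complex_inner) + b))^2 + (norm (a - b))^2 = 2 * (norm a)^2 + 2 * (norm b)^2"
proof -
  have 1: "(norm (a + b))^2 = (norm a)^2 + 2 * Re (cinner a b) + (norm b)^2"
    using norm_add_cscale_sq[of a 1 b] by simp
  have eq: "a - b = a + cscale (-1) b" by (simp add: cscale_minus_left)
  have 2: "(norm (a - b))^2 = (norm a)^2 - 2 * Re (cinner a b) + (norm b)^2"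
    unfolding eq using norm_add_cscale_sq[of a "-1" b] by simp
  show ?thesis using 1 2 by simp
qed

lemma riesz:
  fixes \<phi> :: "'a::chilbert \<Rightarrow> complex"
  assumes add: "\<And>x y. \<phi> (x + y) = \<phi> x + \<phi> y"
    and sc: "\<And>c x. \<phi> (cscale c x) = c * \<phi> x"
    and bd: "\<And>x. cmod (\<phi> x) \<le> norm x * K"
  shows "\<exists>y. \<forall>x. \<phi> x = cinner y x"
proof -
  have scR: "\<phi> (r *\<^sub>R x) = r *\<^sub>R \<phi> x" for r x
    using sc[of "complex_of_real r" x] scaleR_cscale[of r x] by (simp add: scaleR_conv_of_real)
  have bl: "bounded_linear \<phi>"
    by (rule bounded_linear_intro[where K=K]) (use add scR bd in auto)
  show ?thesis
  proof (cases "\<forall>x. \<phi> x = 0")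
    case True
    then show ?thesis by (intro exI[of _ 0]) simp
  next
    case False
    then obtain x0 where x0: "\<phi> x0 \<noteq> 0" by blast
    define Z where "Z = {z. \<phi> z = 1}"
    define f where "f = (\<lambda>z::'a. (norm z)^2)"
    define d where "d = Inf (f ` Z)"
    have x1: "cscale (1 / \<phi> x0) x0 \<in> Z" using x0 by (simp add: Z_def sc)
    have Zne: "f ` Z \<noteq> {}" using x1 by blast
    have bdd: "bdd_below (f ` Z)"
      unfolding bdd_below_def f_def by (intro exI[of _ 0]) auto
    have dle: "d \<le> (norm z)^2" if "z \<in> Z" for z
      using cInf_lower[OF _ bdd, of "f z"] that by (simp add: d_def f_def)
    have "\<exists>z\<in>Z. (norm z)^2 < d + inverse (real (Suc n))" for n
    proof -
      have "Inf (f ` Z) < d + inverse (real (Suc n))" by (simp add: d_def)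
      then obtain w where "w \<in> f ` Z" "w < d + inverse (real (Suc n))"
        using cInf_less_iff[OF Zne bdd] by blast
      then show ?thesis by (auto simp: f_def)
    qed
    then obtain zs where zs: "\<And>n. zs n \<in> Z" "\<And>n. (norm (zs n))^2 < d + inverse (real (Suc n))"
      by metis
    have mid: "(norm (a - b))^2 \<le> 2 * ((norm a)^2 - d) + 2 * ((norm b)^2 - d)"
      if "a \<in> Z" "b \<in> Z" for a b
    proof -
      have "\<phi> ((1/2) *\<^sub>R (a + b)) = 1" using that scR add by (simp add: Z_def scaleR_conv_of_real)
      then have "d \<le> (norm ((1/2) *\<^sub>R (a + b)))^2" using dle[of "(1/2) *\<^sub>R (a + b)"] by (simp only: Z_def mem_Collect_eq)
      also have "\<dots> = (norm (a + b))^2 / 4" by (simp add: power2_eq_square)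
      finally show ?thesis using parallelogram[of a b] by simp
    qed
    have cauchy: "Cauchy zs"
    proof (rule CauchyI)
      fix e :: real assume e: "0 < e"
      then obtain M where M: "inverse (real (Suc M)) < e^2 / 4"
        using reals_Archimedean[of "e^2/4"] e by auto
      have "norm (zs m - zs n) < e" if "m \<ge> M" "n \<ge> M" for m n
      proof -
        have im: "inverse (real (Suc m)) \<le> inverse (real (Suc M))"
          using that by (simp add: le_imp_inverse_le)
        have inn: "inverse (real (Suc n)) \<le> inverse (real (Suc M))"
          using that by (simp add: le_imp_inverse_le)
        have "(norm (zs m - zs n))^2 \<le> 2 * ((norm (zs m))^2 - d) + 2 * ((norm (zs n))^2 - d)"
          using mid zs(1) by blast
        also have "\<dots> < e^2"
        proof -
          define iM where "iM = inverse (real (Suc M))"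
          have a1: "(norm (zs m))^2 - d < iM" using zs(2)[of m] im unfolding iM_def by linarith
          have a2: "(norm (zs n))^2 - d < iM" using zs(2)[of n] inn unfolding iM_def by linarith
          have a3: "4 * iM < e^2" using M unfolding iM_def by linarith
          show ?thesis using a1 a2 a3 by (smt (verit))
        qed
        finally show ?thesis by (rule power_less_imp_less_base) (use e in simp)
      qed
      then show "\<exists>M. \<forall>m\<ge>M. \<forall>n\<ge>M. norm (zs m - zs n) < e" by blast
    qed
    then obtain z where lim: "zs \<longlonglongrightarrow> z"
      using Cauchy_convergent convergent_def by blast
    have "(\<lambda>n. \<phi> (zs n)) \<longlonglongrightarrow> \<phi> z" using bounded_linear.tendsto[OF bl lim] .
    moreover have "(\<lambda>n. \<phi> (zs n)) = (\<lambda>n. 1)" using zs(1) by (simp add: Z_def)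
    ultimately have zZ: "\<phi> z = 1" using LIMSEQ_unique tendsto_const by metis
    have "(\<lambda>n. (norm (zs n))^2) \<longlonglongrightarrow> (norm z)^2" by (intro tendsto_intros lim)
    moreover have "(\<lambda>n. d + inverse (real (Suc n))) \<longlonglongrightarrow> d + 0"
      by (intro tendsto_add tendsto_const LIMSEQ_inverse_real_of_nat)
    ultimately have zd: "(norm z)^2 \<le> d"
      using LIMSEQ_le[of "\<lambda>n. (norm (zs n))^2" _ "\<lambda>n. d + inverse (real (Suc n))"] zs(2)
      by (simp add: less_imp_le)
    have zmin: "(norm z)^2 \<le> (norm w)^2" if "\<phi> w = 1" for w
    proof -
      have "w \<in> Z" using that by (simp add: Z_def)
      from dle[OF this] zd show ?thesis by (smt (verit))
    qed
    have orth: "cinner z k = 0" if k: "\<phi> k = 0" for k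
    proof (rule ccontr)
      assume "cinner z k \<noteq> 0"
      define \<alpha> where "\<alpha> = cinner z k"
      define A where "A = (cmod \<alpha>)^2"
      have A: "A > 0" using \<open>cinner z k \<noteq> 0\<close> by (simp add: A_def \<alpha>_def)
      define nk where "nk = (norm k)^2"
      define \<rho> where "\<rho> = 1 / (nk + 1)"
      have nk: "nk \<ge> 0" by (simp add: nk_def)
      have \<rho>: "\<rho> > 0" using nk by (simp add: \<rho>_def)
      define t where "t = - complex_of_real \<rho> * cnj \<alpha>"
      have "\<phi> (z + cscale t k) = 1" using zZ k by (simp add: add sc)
      then have "(norm z)^2 \<le> (norm (z + cscale t k))^2" by (rule zmin)
      also have "\<dots> = (norm z)^2 + 2 * Re (t * \<alpha>) + (cmod t)^2 * nk"
        unfolding \<alpha>_def nk_def by (rule norm_add_cscale_sq)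
      also have "t * \<alpha> = complex_of_real (- (\<rho> * A))"
      proof -
        have aa: "cnj \<alpha> * \<alpha> = complex_of_real A"
          unfolding A_def by (metis complex_norm_square mult.commute)
        have "t * \<alpha> = - complex_of_real \<rho> * (cnj \<alpha> * \<alpha>)"
          unfolding t_def by (simp only: mult.assoc)
        then show ?thesis unfolding aa by simp
      qed
      also have "(cmod t)^2 = \<rho>^2 * A"
        using \<rho> by (simp add: t_def norm_mult A_def power_mult_distrib)
      finally have "0 \<le> \<rho> * A * (\<rho> * nk - 2)" by (simp add: algebra_simps power2_eq_square)
      moreover have "\<rho> * A > 0" using \<rho> A by simp
      ultimately have "\<rho> * nk - 2 \<ge> 0" by (simp add: zero_le_mult_iff)
      moreover have "\<rho> * nk < 1" using nk by (simp add: \<rho>_def)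
      ultimately show False by simp
    qed
    have z0: "z \<noteq> 0" using zZ bl by (auto simp: linear_simps bounded_linear.linear)
    have nz: "(norm z)^2 > 0" using z0 by simp
    define y where "y = cscale (complex_of_real (1 / (norm z)^2)) z"
    have "\<phi> x = cinner y x" for x
    proof -
      have "\<phi> (x - cscale (\<phi> x) z) = 0"
      proof -
        have "\<phi> x = \<phi> (x - cscale (\<phi> x) z) + \<phi> (cscale (\<phi> x) z)"
          using add[of "x - cscale (\<phi> x) z" "cscale (\<phi> x) z"] by simp
        then show ?thesis using zZ by (simp add: sc)
      qed
      then have "cinner z (x - cscale (\<phi> x) z) = 0" by (rule orth)
      then have "cinner z x = \<phi> x * complex_of_real ((norm z)^2)"
        by (simp add: cinner_diff_right cinner_cscale_right cinner_self)
      then show ?thesis using nz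
        by (simp add: y_def cinner_cscale_left)
    qed
    then show ?thesis by blast
  qed
qed


lemma bcl_add: "bounded_clinear T \<Longrightarrow> T (x + y) = T x + T y"
  by (simp add: bounded_clinear_def)
lemma bcl_cscale: "bounded_clinear T \<Longrightarrow> T (cscale c x) = cscale c (T x)"
  by (simp add: bounded_clinear_def)
lemma bcl_zero: "bounded_clinear (T::'a::complex_inner \<Rightarrow> 'b::complex_inner) \<Longrightarrow> T 0 = 0"
  using bcl_cscale[of T 0 0] by simp
lemma bcl_diff: "bounded_clinear (T::'a::complex_inner \<Rightarrow> 'b::complex_inner) \<Longrightarrow> T (x - y) = T x - T y"
  using bcl_add[of T "x - y" y] by (simp add: eq_diff_eq)
lemma bcl_scaleR: "bounded_clinear (T::'a::complex_inner \<Rightarrow> 'b::complex_inner) \<Longrightarrow> T (r *\<^sub>R x) = r *\<^sub>R T x"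
  by (simp add: scaleR_cscale bcl_cscale)

lemma adjoint_exists:
  fixes T :: "'a::chilbert \<Rightarrow> 'a"
  assumes T: "bounded_clinear T"
  shows "\<exists>S. \<forall>x y. cinner (T x) y = cinner x (S y)"
proof -
  obtain K where K: "\<And>x. norm (T x) \<le> norm x * K" using T unfolding bounded_clinear_def by blast
  have "\<exists>v. \<forall>x. cinner y (T x) = cinner v x" for y
  proof (rule riesz[where K="K * norm y"])
    show "cinner y (T (x + z)) = cinner y (T x) + cinner y (T z)" for x z
      by (simp add: bcl_add[OF T] cinner_add_right)
    show "cinner y (T (cscale c x)) = c * cinner y (T x)" for c x
      by (simp add: bcl_cscale[OF T] cinner_cscale_right)
    show "cmod (cinner y (T x)) \<le> norm x * (K * norm y)" for x
    proof -
      have "cmod (cinner y (T x)) \<le> norm y * norm (T x)" by (rule cauchy_schwarz)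
      also have "\<dots> \<le> norm y * (norm x * K)" by (rule mult_left_mono[OF K]) simp
      finally show ?thesis by (simp add: ac_simps)
    qed
  qed
  then obtain S where S: "\<And>y x. cinner y (T x) = cinner (S y) x" by metis
  have "cinner (T x) y = cinner x (S y)" for x y
    using S[of y x] cinner_commute[of "T x" y] cinner_commute[of "S y" x] by simp
  then show ?thesis by blast
qed

lemma cadj_prop:
  fixes T :: "'a::chilbert \<Rightarrow> 'a"
  assumes T: "bounded_clinear T"
  shows "cinner (T x) y = cinner x (cadj T y)"
proof -
  obtain S where S: "\<forall>x y. cinner (T x) y = cinner x (S y)" using adjoint_exists[OF T] by blast
  have "cadj T = S" unfolding cadj_def
  proof (rule the_equality)
    show "\<forall>x y. cinner (T x) y = cinner x (S y)" by (rule S)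
    fix S' assume S': "\<forall>x y. cinner (T x) y = cinner x (S' y)"
    show "S' = S"
    proof
      fix y show "S' y = S y" by (rule cinner_ext) (use S S' in metis)
    qed
  qed
  then show ?thesis using S by simp
qed

lemma cadj_prop2:
  fixes T :: "'a::chilbert \<Rightarrow> 'a"
  assumes T: "bounded_clinear T"
  shows "cinner (cadj T y) x = cinner y (T x)"
  using cadj_prop[OF T, of x y] cinner_commute[of "T x" y] cinner_commute[of x "cadj T y"]
  by simp

lemma cadj_add:
  fixes T :: "'a::chilbert \<Rightarrow> 'a"
  assumes T: "bounded_clinear T"
  shows "cadj T (y + z) = cadj T y + cadj T z"
  by (rule cinner_ext) (simp add: cadj_prop[OF T, symmetric] cinner_add_right)

lemma cadj_cscale:
  fixes T :: "'a::chilbert \<Rightarrow> 'a"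
  assumes T: "bounded_clinear T"
  shows "cadj T (cscale c y) = cscale c (cadj T y)"
  by (rule cinner_ext) (simp add: cadj_prop[OF T, symmetric] cinner_cscale_right)

lemma cadj_zero:
  fixes T :: "'a::chilbert \<Rightarrow> 'a"
  assumes T: "bounded_clinear T"
  shows "cadj T 0 = 0"
  using cadj_cscale[OF T, of 0 0] by simp

lemma cadj_diff:
  fixes T :: "'a::chilbert \<Rightarrow> 'a"
  assumes T: "bounded_clinear T"
  shows "cadj T (y - z) = cadj T y - cadj T z"
  using cadj_add[OF T, of "y - z" z] by (simp add: eq_diff_eq)

lemma cadj_scaleR:
  fixes T :: "'a::chilbert \<Rightarrow> 'a"
  assumes T: "bounded_clinear T"
  shows "cadj T (r *\<^sub>R y) = r *\<^sub>R cadj T y"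
  by (simp add: scaleR_cscale cadj_cscale[OF T])

lemma cadj_pow:
  fixes T :: "'a::chilbert \<Rightarrow> 'a"
  assumes T: "bounded_clinear T"
  shows "cinner x ((cadj T ^^ j) y) = cinner ((T ^^ j) x) y"
proof (induction j arbitrary: x)
  case 0 then show ?case by simp
next
  case (Suc j)
  have "cinner x ((cadj T ^^ Suc j) y) = cinner x (cadj T ((cadj T ^^ j) y))"
    by (simp add: funpow_swap1)
  also have "\<dots> = cinner (T x) ((cadj T ^^ j) y)" by (simp add: cadj_prop[OF T])
  also have "\<dots> = cinner ((T ^^ j) (T x)) y" by (rule Suc.IH)
  also have "(T ^^ j) (T x) = (T ^^ Suc j) x" by (simp add: funpow_swap1)
  finally show ?case .
qed

lemma concave_form:
  fixes T :: "'a::chilbert \<Rightarrow> 'a"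
  assumes T: "bounded_clinear T" and C: "concave_op T"
  shows "(norm (T (T x)))^2 - 2 * (norm (T x))^2 + (norm x)^2 \<le> 0"
proof -
  have "0 \<le> Re (cinner x (- (cadj T (cadj T (T (T x))) - 2 *\<^sub>R cadj T (T x) + x)))"
    using C unfolding concave_op_def oneg_def opos_def by blast
  also have "cinner x (- (cadj T (cadj T (T (T x))) - 2 *\<^sub>R cadj T (T x) + x))
    = - (cinner x (cadj T (cadj T (T (T x)))) - complex_of_real 2 * cinner x (cadj T (T x)) + cinner x x)"
    by (simp add: cinner_minus_right cinner_add_right cinner_diff_right cinner_scaleR_right)
  also have "cinner x (cadj T (cadj T (T (T x)))) = cinner (T (T x)) (T (T x))"
    by (simp add: cadj_prop[OF T, symmetric])
  also have "cinner x (cadj T (T x)) = cinner (T x) (T x)"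
    by (simp add: cadj_prop[OF T, symmetric])
  finally show ?thesis by (simp add: cinner_self)
qed

lemma expansive:
  fixes T :: "'a::chilbert \<Rightarrow> 'a"
  assumes T: "bounded_clinear T" and C: "concave_op T"
  shows "(norm x)^2 \<le> (norm (T x))^2"
proof (rule ccontr)
  assume neg: "\<not> ?thesis"
  define a where "a = (\<lambda>n. (norm ((T ^^ n) x))^2)"
  have step: "a (Suc (Suc n)) - 2 * a (Suc n) + a n \<le> 0" for n
    using concave_form[OF T C, of "(T ^^ n) x"] by (simp add: a_def)
  define d where "d = a 1 - a 0"
  have neg': "(norm (T x))^2 < (norm x)^2" using neg by linarith
  have d: "d < 0" using neg' by (simp add: d_def a_def)
  have dn: "a (Suc n) - a n \<le> d" for n
  proof (induction n)
    case 0 then show ?case by (simp add: d_def)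
  next
    case (Suc n) then show ?case using step[of n] by linarith
  qed
  have an: "a n \<le> a 0 + real n * d" for n
  proof (induction n)
    case 0 then show ?case by simp
  next
    case (Suc n) then show ?case using dn[of n] by (simp add: algebra_simps)
  qed
  obtain n where n: "a 0 < real n * (- d)" using ex_less_of_nat_mult[of "- d" "a 0"] d by auto
  have "a n < 0" using an[of n] n by (simp add: algebra_simps)
  moreover have "a n \<ge> 0" by (simp add: a_def)
  ultimately show False by simp
qed


lemma Delta_sa:
  fixes T :: "'a::chilbert \<Rightarrow> 'a"
  assumes T: "bounded_clinear T"
  shows "cinner a (Delta T b) = cinner (Delta T a) b"
  by (simp add: Delta_def cinner_diff_right cinner_diff_left cadj_prop2[OF T] cadj_prop[OF T, symmetric])

lemma Delta_form:
  fixes T :: "'a::chilbert \<Rightarrow> 'a"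
  assumes T: "bounded_clinear T"
  shows "cinner x (Delta T x) = complex_of_real ((norm (T x))^2 - (norm x)^2)"
  by (simp add: Delta_def cinner_diff_right cadj_prop[OF T, symmetric] cinner_self)

lemma structure_e:
  fixes T :: "'a::chilbert \<Rightarrow> 'a"
  assumes T: "bounded_clinear T" and C: "concave_op T" and R: "rank_one (Delta T)"
  shows "\<exists>e. e \<noteq> 0 \<and> (\<forall>x. Delta T x = cscale (cinner e x) e)"
proof -
  obtain e0 where e0: "e0 \<noteq> 0" and rg: "range (Delta T) = {cscale c e0 | c. True}"
    using R unfolding rank_one_def by blast
  have "\<exists>c. Delta T x = cscale c e0" for x
  proof -
    have "Delta T x \<in> range (Delta T)" by simp
    then show ?thesis unfolding rg by blast
  qed
  then obtain f where f: "\<And>x. Delta T x = cscale (f x) e0" by metis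
  define E0 where "E0 = (norm e0)^2"
  have E0: "E0 > 0" using e0 by (simp add: E0_def)
  define \<gamma> where "\<gamma> = cnj (f e0) / complex_of_real E0"
  have fx: "f x = \<gamma> * cinner e0 x" for x
  proof -
    have "cinner e0 (Delta T x) = f x * complex_of_real E0"
      by (simp add: f cinner_cscale_right cinner_self E0_def)
    moreover have "cinner e0 (Delta T x) = cnj (f e0) * cinner e0 x"
    proof -
      have "cinner e0 (Delta T x) = cinner (Delta T e0) x" by (rule Delta_sa[OF T])
      also have "\<dots> = cnj (f e0) * cinner e0 x" by (simp add: f cinner_cscale_left)
      finally show ?thesis .
    qed
    ultimately have "f x * complex_of_real E0 = cnj (f e0) * cinner e0 x" by simp
    then show ?thesis using E0 by (simp add: \<gamma>_def field_simps)
  qed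
  define g where "g = ((norm (T e0))^2 - (norm e0)^2) / E0^2"
  have "cinner e0 (Delta T e0) = \<gamma> * complex_of_real (E0^2)"
    by (simp add: f fx cinner_cscale_right cinner_self E0_def power2_eq_square)
  then have "\<gamma> * complex_of_real (E0^2) = complex_of_real ((norm (T e0))^2 - (norm e0)^2)"
    using Delta_form[OF T, of e0] by simp
  then have \<gamma>g: "\<gamma> = complex_of_real g" using E0 by (simp add: g_def field_simps)
  have g0: "g \<ge> 0" using expansive[OF T C, of e0] E0 by (simp add: g_def)
  have gne: "g \<noteq> 0"
  proof
    assume "g = 0"
    then have "\<forall>x. Delta T x = 0" by (simp add: f fx \<gamma>g)
    moreover have "e0 \<in> range (Delta T)" unfolding rg by (auto intro: exI[of _ 1])
    ultimately show False using e0 by auto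
  qed
  define e where "e = cscale (complex_of_real (sqrt g)) e0"
  have "Delta T x = cscale (cinner e x) e" for x
  proof -
    have "cscale (cinner e x) e = cscale (complex_of_real (sqrt g) * cinner e0 x * complex_of_real (sqrt g)) e0"
      by (simp add: e_def cinner_cscale_left cscale_cscale)
    also have "complex_of_real (sqrt g) * cinner e0 x * complex_of_real (sqrt g) = complex_of_real g * cinner e0 x"
    proof -
      have "complex_of_real (sqrt g) * complex_of_real (sqrt g) = complex_of_real g"
        using g0 by (simp flip: of_real_mult)
      then show ?thesis by (simp add: ac_simps)
    qed
    finally show ?thesis by (simp add: f fx \<gamma>g)
  qed
  moreover have "e \<noteq> 0"
  proof
    assume "e = 0"
    then have "cinner e0 e = 0" by simp
    then have "complex_of_real (sqrt g) * complex_of_real E0 = 0"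
      by (simp add: e_def cinner_cscale_right cinner_self E0_def)
    then show False using g0 gne E0 by simp
  qed
  ultimately show ?thesis by blast
qed


lemma mod_sq: "z * cnj z = complex_of_real ((cmod z)^2)"
  by (metis complex_norm_square)

lemma norm_cscale: "norm (cscale c (x::'a::complex_inner)) = cmod c * norm x"
proof -
  have "(norm (cscale c x))^2 = Re (c * cnj c * cinner x x)"
    by (simp only: norm_sq_Re cinner_cscale_left cinner_cscale_right mult.assoc)
  also have "c * cnj c = complex_of_real ((cmod c)^2)" by (rule mod_sq)
  also have "cinner x x = complex_of_real ((norm x)^2)" by (rule cinner_self)
  finally have "(norm (cscale c x))^2 = (cmod c * norm x)^2"
    by (simp only: Re_complex_of_real power_mult_distrib flip: of_real_mult)
  then show ?thesis by (simp add: power2_eq_iff_nonneg)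
qed

lemma opos_sa:
  fixes S :: "'a::complex_inner \<Rightarrow> 'a"
  assumes S: "bounded_clinear S" and P: "opos S"
  shows "cinner x (S y) = cinner (S x) y"
proof -
  have im0: "Im (cinner z (S z)) = 0" for z using P unfolding opos_def by blast
  have h1: "Im (cinner x (S y) + cinner y (S x)) = 0"
  proof -
    have "cinner (x + y) (S (x + y)) = cinner x (S x) + cinner y (S y) + (cinner x (S y) + cinner y (S x))"
      by (simp add: bcl_add[OF S] cinner_add_left cinner_add_right algebra_simps)
    then show ?thesis using im0[of "x + y"] im0[of x] im0[of y] by simp
  qed
  have h2: "Re (cinner x (S y) - cinner y (S x)) = 0"
  proof -
    have "cinner (x + cscale \<i> y) (S (x + cscale \<i> y))
       = cinner x (S x) + cinner y (S y) + \<i> * (cinner x (S y) - cinner y (S x))"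
      by (simp add: bcl_add[OF S] bcl_cscale[OF S] cinner_add_left cinner_add_right
          cinner_cscale_left cinner_cscale_right algebra_simps)
    then show ?thesis using im0[of "x + cscale \<i> y"] im0[of x] im0[of y] by simp
  qed
  have "cinner (S x) y = cnj (cinner y (S x))" by (rule cinner_commute)
  then show ?thesis using h1 h2 by (simp add: complex_eq_iff)
qed

locale cstr =
  fixes T :: "'a::chilbert \<Rightarrow> 'a" and e :: 'a
  assumes T: "bounded_clinear T" and C: "concave_op T" and e0: "e \<noteq> 0"
    and D: "\<And>x. Delta T x = cscale (cinner e x) e"
begin

definition nn where "nn = norm e"
definition E where "E = (norm e)^2"

lemma nn_pos: "nn > 0" using e0 by (simp add: nn_def)
lemma E_pos: "E > 0" using e0 by (simp add: E_def)
lemma E_nn: "E = nn^2" by (simp add: E_def nn_def)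
lemma cee: "cinner e e = complex_of_real E" by (simp add: cinner_self E_def)

lemma cxe: "cinner x e = cnj (cinner e x)" by (rule cinner_commute)

lemma G: "cadj T (T x) = x + cscale (cinner e x) e"
  using D[of x] unfolding Delta_def by (simp add: diff_eq_eq add.commute)

lemma normT: "(norm (T x))^2 = (norm x)^2 + (cmod (cinner e x))^2"
proof -
  have "cinner x (Delta T x) = cinner e x * cnj (cinner e x)"
    by (simp add: D cinner_cscale_right cxe[of x] mult.commute)
  also have "\<dots> = complex_of_real ((cmod (cinner e x))^2)" by (rule mod_sq)
  finally have calc: "cinner x (Delta T x) = complex_of_real ((cmod (cinner e x))^2)" .
  have "complex_of_real ((norm (T x))^2 - (norm x)^2) = complex_of_real ((cmod (cinner e x))^2)"
    by (rule trans[OF sym[OF Delta_form[OF T, of x]] calc])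
  then have "(norm (T x))^2 - (norm x)^2 = (cmod (cinner e x))^2" by (simp only: of_real_eq_iff)
  then show ?thesis by linarith
qed

lemma conc_e: "cmod (cinner e (T x)) \<le> cmod (cinner e x)"
proof -
  have "(norm (T (T x)))^2 - 2 * (norm (T x))^2 + (norm x)^2 \<le> 0"
    by (rule concave_form[OF T C])
  then have "(cmod (cinner e (T x)))^2 \<le> (cmod (cinner e x))^2"
    using normT[of x] normT[of "T x"] by linarith
  then show ?thesis by (rule power2_le_imp_le) simp
qed

definition lam where "lam = cinner e (cadj T e) / complex_of_real E"

lemma Tstar_e: "cadj T e = cscale lam e"
proof -
  define w where "w = cadj T e - cscale lam e"
  have "lam * complex_of_real E = cinner e (cadj T e)" using E_pos by (simp add: lam_def)
  then have ew: "cinner e w = 0"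
    by (simp add: w_def cinner_diff_right cinner_cscale_right cee)
  have "cmod (cinner e (T w)) \<le> cmod (cinner e w)" by (rule conc_e)
  then have eTw: "cinner e (T w) = 0" using ew by simp
  have "cinner w (cadj T e) = cinner (T w) e" by (simp add: cadj_prop[OF T])
  also have "\<dots> = cnj (cinner e (T w))" by (rule cinner_commute)
  finally have 1: "cinner w (cadj T e) = 0" using eTw by simp
  have 2: "cinner w (cscale lam e) = 0"
    by (simp add: cinner_cscale_right cxe[of w] ew)
  then show ?thesis
  proof -
    have "cinner w w = cinner w (cadj T e) - cinner w (cscale lam e)"
      by (simp add: w_def cinner_diff_right)
    then have "cinner w w = 0" using 1 2 by simp
    then have "w = 0" using cinner_eq_zero_iff by blast
    then show ?thesis by (simp add: w_def)
  qed
qed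

lemma eT: "cinner e (T x) = cnj lam * cinner e x"
proof -
  have "cinner e (T x) = cinner (cadj T e) x" by (simp add: cadj_prop2[OF T])
  then show ?thesis by (simp add: Tstar_e cinner_cscale_left)
qed

lemma lam_le: "cmod lam \<le> 1"
proof -
  have "cmod (cinner e (T e)) \<le> cmod (cinner e e)" by (rule conc_e)
  then have "cmod lam * E \<le> E" using E_pos by (simp add: eT cee norm_mult)
  then show ?thesis using E_pos by simp
qed

definition R where "R = (\<lambda>x. cscale (complex_of_real (1 / nn) * cinner e x) e)"

lemma R_bcl: "bounded_clinear R"
  unfolding bounded_clinear_def
proof (intro conjI allI exI)
  show "R (x + y) = R x + R y" for x y
    by (simp add: R_def cinner_add_right add_divide_distrib cscale_add_left)
  show "R (cscale c x) = cscale c (R x)" for c x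
    by (simp add: R_def cinner_cscale_right cscale_cscale ac_simps)
  show "norm (R x) \<le> norm x * nn" for x
  proof -
    have "norm (R x) = cmod (cinner e x)" using nn_pos
      by (simp add: R_def norm_cscale norm_mult nn_def norm_divide)
    also have "\<dots> \<le> norm e * norm x" by (rule cauchy_schwarz)
    finally show ?thesis by (simp add: nn_def mult.commute)
  qed
qed

lemma R_opos: "opos R"
  unfolding opos_def
proof
  fix x
  have "cinner x (R x) = complex_of_real (1 / nn) * (cinner e x * cnj (cinner e x))"
    by (simp add: R_def cinner_cscale_right cxe[of x] ac_simps)
  also have "\<dots> = complex_of_real (1 / nn * (cmod (cinner e x))^2)" by (simp add: mod_sq)
  finally show "Im (cinner x (R x)) = 0 \<and> 0 \<le> Re (cinner x (R x))" using nn_pos by simp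
qed

lemma R_sq: "R (R x) = Delta T x"
proof -
  have "R (R x) = cscale (complex_of_real (1 / nn) * (complex_of_real (1 / nn) * cinner e x * complex_of_real E)) e"
    by (simp add: R_def cinner_cscale_right cee)
  also have "complex_of_real (1 / nn) * (complex_of_real (1 / nn) * cinner e x * complex_of_real E) = cinner e x"
    using nn_pos by (simp add: E_nn power2_eq_square field_simps flip: of_real_mult)
  finally show ?thesis by (simp add: D)
qed

lemma sqrt_unique:
  assumes S: "bounded_clinear S" and P: "opos S" and SS: "\<And>x. S (S x) = Delta T x"
  shows "S = R"
proof -
  have sa: "cinner x (S y) = cinner (S x) y" for x y by (rule opos_sa[OF S P])
  have nS: "(norm (S x))^2 = (cmod (cinner e x))^2" for x
  proof -
    have "complex_of_real ((norm (S x))^2) = cinner (S x) (S x)" by (simp add: cinner_self)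
    also have "\<dots> = cinner x (S (S x))" by (simp add: sa)
    also have "\<dots> = cinner e x * cnj (cinner e x)"
      by (simp add: SS D cinner_cscale_right cxe[of x] mult.commute)
    also have "\<dots> = complex_of_real ((cmod (cinner e x))^2)" by (rule mod_sq)
    finally show ?thesis by (simp only: of_real_eq_iff)
  qed
  have decomp: "S x = cscale (cinner e x / complex_of_real E) (S e)" for x
  proof -
    define x' where "x' = x - cscale (cinner e x / complex_of_real E) e"
    have "cinner e x' = 0" using E_pos by (simp add: x'_def cinner_diff_right cinner_cscale_right cee)
    then have "norm (S x') = 0" using nS[of x'] by simp
    then have "S x' = 0" by simp
    then show ?thesis by (simp add: x'_def bcl_diff[OF S] bcl_cscale[OF S])
  qed
  define v where "v = S e"
  define a where "a = cinner e v"
  have aIm: "Im a = 0" and aRe: "0 \<le> Re a" using P unfolding opos_def a_def v_def by auto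
  define ar where "ar = Re a"
  have a_ar: "a = complex_of_real ar" using aIm by (simp add: ar_def complex_eq_iff)
  have Sv1: "S v = cscale (a / complex_of_real E) v" using decomp[of v] by (simp add: a_def v_def[symmetric])
  have Sv2: "S v = cscale (complex_of_real E) e" by (simp add: v_def SS D cee)
  have eq: "cscale (a / complex_of_real E) v = cscale (complex_of_real E) e" using Sv1 Sv2 by simp
  have "a / complex_of_real E * a = complex_of_real E * complex_of_real E"
    using arg_cong[OF eq, of "cinner e"] by (simp add: cinner_cscale_right a_def cee)
  then have "ar * ar = E * E * E" using E_pos by (simp add: a_ar field_simps flip: of_real_mult)
  then have "ar^2 = (nn^3)^2" by (simp add: E_nn power2_eq_square power3_eq_cube ac_simps)
  then have arsq: "ar^2 = (nn^3)^2" .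
  have ar0: "0 \<le> ar" using aRe by (simp add: ar_def)
  have "0 \<le> nn^3" using nn_pos by simp
  then have arn: "ar = nn^3" using arsq ar0 power2_eq_iff_nonneg by blast
  have "v = cscale (complex_of_real E / a) (cscale (a / complex_of_real E) v)"
    using E_pos nn_pos arn by (simp add: cscale_cscale a_ar)
  also have "\<dots> = cscale (complex_of_real E / a) (cscale (complex_of_real E) e)"
    by (simp only: eq)
  also have "\<dots> = cscale (complex_of_real E / a * complex_of_real E) e"
    by (rule cscale_cscale)
  also have "complex_of_real E / a * complex_of_real E = complex_of_real (E / ar * E)"
    by (simp add: a_ar)
  also have "E / ar * E = nn" using nn_pos arn
    by (simp add: E_nn power2_eq_square power3_eq_cube field_simps)
  finally have v: "v = cscale (complex_of_real nn) e" .
  show ?thesis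
  proof
    fix x
    have "S x = cscale (cinner e x / complex_of_real E * complex_of_real nn) e"
      using decomp[of x] by (simp add: v_def[symmetric] v cscale_cscale)
    also have "cinner e x / complex_of_real E * complex_of_real nn = complex_of_real (1 / nn) * cinner e x"
      using nn_pos by (simp add: E_nn power2_eq_square field_simps)
    finally show "S x = R x" by (simp add: R_def)
  qed
qed

lemma osqrt_Delta: "osqrt (Delta T) = R"
  unfolding osqrt_def
proof (rule the_equality)
  show "bounded_clinear R \<and> opos R \<and> (\<forall>x. R (R x) = Delta T x)"
    using R_bcl R_opos R_sq by blast
  show "S = R" if "bounded_clinear S \<and> opos S \<and> (\<forall>x. S (S x) = Delta T x)" for S
    using that sqrt_unique by blast
qed

lemma regular: "Delta_regular T"
  unfolding Delta_regular_def osqrt_Delta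
proof
  fix x
  have "R (T (R x)) = cscale (complex_of_real (1 / nn) * (complex_of_real (1 / nn) * cinner e x * (cnj lam * complex_of_real E))) e"
    by (simp add: R_def bcl_cscale[OF T] cinner_cscale_right eT cee)
  also have "complex_of_real (1 / nn) * (complex_of_real (1 / nn) * cinner e x * (cnj lam * complex_of_real E))
      = cnj lam * cinner e x"
    using nn_pos by (simp add: E_nn power2_eq_square field_simps flip: of_real_mult)
  finally show "Delta T (T x) = R (T (R x))" by (simp add: D eT)
qed

end


lemma binsum:
  fixes r q X :: real and n :: nat
  assumes r0: "0 \<le> r" and r1: "r \<le> 1" and n: "n \<ge> 1" and q: "0 \<le> q"
  shows "(\<Sum>j = 0..n. ((-1) ^ j * real (n choose j)) * (X + q * (\<Sum>k<j. r ^ k))) \<le> 0"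
proof -
  have s0: "(\<Sum>j = 0..n. ((-1) ^ j * real (n choose j))) = 0"
    using choose_alternating_sum[of n, where 'a=real] n by (simp add: atLeast0AtMost)
  have split: "(\<Sum>j = 0..n. ((-1) ^ j * real (n choose j)) * (X + q * (\<Sum>k<j. r ^ k)))
     = X * (\<Sum>j = 0..n. ((-1) ^ j * real (n choose j)))
       + q * (\<Sum>j = 0..n. ((-1) ^ j * real (n choose j)) * (\<Sum>k<j. r ^ k))"
  proof -
    have "((-1) ^ j * real (n choose j)) * (X + q * (\<Sum>k<j. r ^ k))
       = X * ((-1) ^ j * real (n choose j)) + q * (((-1) ^ j * real (n choose j)) * (\<Sum>k<j. r ^ k))" for j
      by (simp only: distrib_left mult.commute mult.left_commute)
    then show ?thesis by (simp only: sum.distrib sum_distrib_left)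
  qed
  have F: "(\<Sum>j = 0..n. ((-1) ^ j * real (n choose j)) * (\<Sum>k<j. r ^ k)) \<le> 0"
  proof (cases "r = 1")
    case True
    then have "(\<Sum>j = 0..n. ((-1) ^ j * real (n choose j)) * (\<Sum>k<j. r ^ k))
        = (\<Sum>j\<le>n. (-1) ^ j * real j * real (n choose j))"
      by (simp add: atLeast0AtMost algebra_simps)
    also have "\<dots> \<le> 0"
    proof (cases "n = 1")
      case True then show ?thesis by simp
    next
      case False then show ?thesis using choose_alternating_linear_sum[OF False, where 'a=real] by simp
    qed
    finally show ?thesis .
  next
    case False
    then have rl: "r < 1" using r1 by simp
    have "(\<Sum>j = 0..n. ((-1) ^ j * real (n choose j)) * (\<Sum>k<j. r ^ k))
        = (\<Sum>j = 0..n. ((-1) ^ j * real (n choose j)) * ((1 - r ^ j) / (1 - r)))"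
      using False by (simp add: sum_gp_strict)
    also have "\<dots> = (\<Sum>j = 0..n. ((-1) ^ j * real (n choose j)) * (1 - r ^ j)) / (1 - r)"
      by (simp add: sum_divide_distrib)
    also have "(\<Sum>j = 0..n. ((-1) ^ j * real (n choose j)) * (1 - r ^ j))
        = (\<Sum>j = 0..n. ((-1) ^ j * real (n choose j))) - (\<Sum>j = 0..n. real (n choose j) * (- r) ^ j)"
    proof -
      have eqj: "((-1) ^ j * real (n choose j)) * (1 - r ^ j)
          = ((-1) ^ j * real (n choose j)) - real (n choose j) * (- r) ^ j" for j
      proof -
        have "(- r) ^ j = (-1) ^ j * r ^ j" by (rule power_minus)
        then show ?thesis by (simp only: right_diff_distrib mult_1_right mult.assoc mult.commute mult.left_commute)
      qed
      show ?thesis by (simp only: eqj sum_subtractf)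
    qed
    also have "(\<Sum>j = 0..n. real (n choose j) * (- r) ^ j) = (1 - r) ^ n"
      using binomial_ring[of "- r" 1 n] by (simp add: atLeast0AtMost)
    finally show ?thesis using s0 rl by simp
  qed
  show ?thesis unfolding split s0 using F q by (simp add: mult_nonneg_nonpos)
qed

lemma cinner_sum_right: "cinner (x::'a::complex_inner) (sum f A) = (\<Sum>i\<in>A. cinner x (f i))"
  by (induction A rule: infinite_finite_induct) (simp_all add: cinner_add_right)

context cstr begin

lemma Tpow_e: "cinner e ((T ^^ j) x) = (cnj lam)^j * cinner e x"
  by (induction j) (simp_all add: eT)

lemma normTpow: "(norm ((T ^^ j) x))^2 = (norm x)^2 + (cmod (cinner e x))^2 * (\<Sum>k<j. ((cmod lam)^2)^k)"
proof (induction j)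
  case 0 then show ?case by simp
next
  case (Suc j)
  have "(norm ((T ^^ Suc j) x))^2 = (norm ((T ^^ j) x))^2 + (cmod (cinner e ((T ^^ j) x)))^2"
    by (simp add: normT)
  also have "(cmod (cinner e ((T ^^ j) x)))^2 = (cmod (cinner e x))^2 * ((cmod lam)^2)^j"
    by (simp add: Tpow_e norm_mult norm_power power_mult_distrib power_mult[symmetric] mult.commute
        flip: power_mult)
  finally show ?case using Suc.IH by (simp add: algebra_simps)
qed

lemma compl_hyper: "completely_hyperexpansive T"
  unfolding completely_hyperexpansive_def oneg_def opos_def
proof (intro allI impI)
  fix n :: nat and x assume n: "n \<ge> 1"
  define c where "c = (\<lambda>j::nat. (-1) ^ j * real (n choose j))"
  have "cinner x (- (\<Sum>j = 0..n. c j *\<^sub>R (cadj T ^^ j) ((T ^^ j) x)))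
      = - (\<Sum>j = 0..n. complex_of_real (c j) * cinner ((T ^^ j) x) ((T ^^ j) x))"
    by (simp add: cinner_minus_right cinner_sum_right cinner_scaleR_right cadj_pow[OF T])
  also have "\<dots> = complex_of_real (- (\<Sum>j = 0..n. c j * (norm ((T ^^ j) x))^2))"
    by (simp add: cinner_self)
  finally have eq: "cinner x (- (\<Sum>j = 0..n. c j *\<^sub>R (cadj T ^^ j) ((T ^^ j) x)))
      = complex_of_real (- (\<Sum>j = 0..n. c j * (norm ((T ^^ j) x))^2))" .
  have "(\<Sum>j = 0..n. c j * (norm ((T ^^ j) x))^2) \<le> 0"
    unfolding normTpow c_def
    by (rule binsum) (use n lam_le in \<open>auto simp: power_le_one\<close>)
  then show "Im (cinner x (- (\<Sum>j = 0..n. ((- 1) ^ j * real (n choose j)) *\<^sub>R (cadj T ^^ j) ((T ^^ j) x)))) = 0 \<and>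
         0 \<le> Re (cinner x (- (\<Sum>j = 0..n. ((- 1) ^ j * real (n choose j)) *\<^sub>R (cadj T ^^ j) ((T ^^ j) x))))"
    using eq unfolding c_def by simp
qed

definition rk :: "real \<Rightarrow> 'a \<Rightarrow> 'a" where
  "rk a x = x + cscale (complex_of_real a * cinner e x) e"

lemma rk_e: "cinner e (rk a x) = complex_of_real (1 + a * E) * cinner e x"
  by (simp add: rk_def cinner_add_right cinner_cscale_right cee algebra_simps)

lemma rk_0: "rk 0 x = x" by (simp add: rk_def)

lemma rk_plus: "rk a x + cscale (complex_of_real b * cinner e x) e = rk (a + b) x"
  by (simp add: rk_def cscale_add_left distrib_right add.assoc)

lemma rk_comp: "rk a (rk b x) = rk (a + b + a * b * E) x"
proof -
  have "rk a (rk b x) = rk b x + cscale (complex_of_real (a * (1 + b * E)) * cinner e x) e"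
    by (simp add: rk_def[of a] rk_e mult.assoc)
  also have "\<dots> = rk (b + a * (1 + b * E)) x" by (rule rk_plus)
  also have "b + a * (1 + b * E) = a + b + a * b * E" by (simp add: algebra_simps)
  finally show ?thesis .
qed

lemma rk_sa: "cinner (rk a x) y = cinner x (rk a y)"
  by (simp add: rk_def cinner_add_left cinner_add_right cinner_cscale_left cinner_cscale_right
      cxe[of x] algebra_simps)

lemma rk_add: "rk a (x + y) = rk a x + rk a y"
  by (simp add: rk_def cinner_add_right distrib_left cscale_add_left algebra_simps)

lemma rk_cscale: "rk a (cscale c x) = cscale c (rk a x)"
  by (simp add: rk_def cinner_cscale_right cscale_cscale cscale_add_right ac_simps)

lemma rk_zero: "rk a 0 = 0" by (simp add: rk_def)

lemma G_rk: "cadj T (T x) = rk 1 x" by (simp add: G rk_def)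

definition cc where "cc = 1 / (1 + E)"

lemma cc_pos: "cc > 0" and cc_lt1: "cc < 1" and cc_E: "1 - cc * E = cc"
  using E_pos by (simp_all add: cc_def field_simps)

definition H where "H = rk (- cc)"

lemma HG: "H (cadj T (T x)) = x"
proof -
  have "- cc + 1 + - cc * 1 * E = 0" using cc_E by simp
  then show ?thesis by (simp add: H_def G_rk rk_comp rk_0)
qed

lemma GH: "cadj T (T (H y)) = y"
proof -
  have "1 + - cc + 1 * - cc * E = 0" using cc_E by simp
  then show ?thesis by (simp add: H_def G_rk rk_comp rk_0)
qed

lemma inv_G: "inv (\<lambda>x. cadj T (T x)) = H"
proof
  fix y
  have inj: "inj (\<lambda>x. cadj T (T x))" by (rule inj_on_inverseI[where g=H]) (simp add: HG)
  show "inv (\<lambda>x. cadj T (T x)) y = H y" by (rule inv_f_eq[OF inj]) (simp add: GH)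
qed

definition S where "S x = T (H x)"
definition Sadj where "Sadj y = H (cadj T y)"

lemma cauchy_S: "cauchy_dual T = S"
  by (rule ext) (simp add: cauchy_dual_def inv_G S_def)

lemma S_adj: "cinner (S x) y = cinner x (Sadj y)"
  by (simp add: S_def Sadj_def cadj_prop[OF T] H_def rk_sa)

lemma SadjS: "Sadj (S z) = H z"
proof -
  have "1 + - cc + 1 * - cc * E = 0" using cc_E by simp
  then show ?thesis by (simp add: S_def Sadj_def G_rk H_def rk_comp rk_0)
qed

lemma contr: "contraction (cauchy_dual T)"
  unfolding contraction_def cauchy_S
proof
  fix y
  have "complex_of_real ((norm (S y))^2) = cinner (S y) (S y)" by (rule cinner_self[symmetric])
  also have "\<dots> = cinner y (Sadj (S y))" by (rule S_adj)
  also have "\<dots> = cinner y y - complex_of_real cc * (cinner e y * cnj (cinner e y))"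
    by (simp add: SadjS H_def rk_def cinner_add_right cinner_cscale_right cxe[of y] algebra_simps)
  also have "\<dots> = complex_of_real ((norm y)^2 - cc * (cmod (cinner e y))^2)"
    by (simp add: mod_sq cinner_self)
  finally have "(norm (S y))^2 = (norm y)^2 - cc * (cmod (cinner e y))^2" by (simp only: of_real_eq_iff)
  then have "(norm (S y))^2 \<le> (norm y)^2" using cc_pos by simp
  then show "norm (S y) \<le> norm y" by (rule power2_le_imp_le) simp
qed

end


context cstr begin

lemma H_add: "H (x + y) = H x + H y" by (simp add: H_def rk_add)
lemma H_cscale: "H (cscale c x) = cscale c (H x)" by (simp add: H_def rk_cscale)
lemma S_add: "S (x + y) = S x + S y" by (simp add: S_def H_add bcl_add[OF T])
lemma S_cscale: "S (cscale c x) = cscale c (S x)" by (simp add: S_def H_cscale bcl_cscale[OF T])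
lemma Sadj_add: "Sadj (x + y) = Sadj x + Sadj y" by (simp add: Sadj_def H_add cadj_add[OF T])
lemma Sadj_cscale: "Sadj (cscale c x) = cscale c (Sadj x)" by (simp add: Sadj_def H_cscale cadj_cscale[OF T])

definition mu where "mu = lam * complex_of_real cc"

lemma He: "H e = cscale (complex_of_real cc) e"
proof -
  have "H e = e + cscale (- complex_of_real (cc * E)) e" by (simp add: H_def rk_def cee)
  also have "\<dots> = cscale (complex_of_real (1 - cc * E)) e"
    by (simp add: cscale_diff_left cscale_minus_left)
  finally show ?thesis by (simp add: cc_E)
qed

lemma Sadj_e: "Sadj e = cscale mu e"
  by (simp add: Sadj_def Tstar_e H_cscale He cscale_cscale mu_def)

lemma eS: "cinner e (S z) = cnj mu * cinner e z"
  by (simp add: S_def eT H_def rk_e cc_E mu_def)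

definition s where "s = (cmod mu)^2"

lemma mu_le: "cmod mu \<le> 1"
proof -
  have "cmod mu = cmod lam * cc" using cc_pos by (simp add: mu_def norm_mult)
  also have "\<dots> \<le> 1 * 1" using lam_le cc_pos cc_lt1 by (intro mult_mono) auto
  finally show ?thesis by simp
qed

lemma s_lt_cc: "s < cc"
proof -
  have "cmod mu \<le> cc" using lam_le cc_pos by (simp add: mu_def norm_mult mult_left_le_one_le)
  then have "s \<le> cc^2" unfolding s_def by (intro power_mono) auto
  also have "cc^2 < cc" using cc_pos cc_lt1 by (simp add: power2_eq_square)
  finally show ?thesis .
qed

definition p where "p = cc * E / (1 - s)"

lemma s0: "0 \<le> s" by (simp add: s_def)
lemma p0: "0 \<le> p" using s_lt_cc cc_lt1 cc_pos E_pos by (simp add: p_def)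
lemma p1: "p < 1"
proof -
  have "cc * E < 1 - s" using s_lt_cc cc_E by simp
  then show ?thesis using s_lt_cc cc_lt1 by (simp add: p_def)
qed
lemma p_eq: "p * (1 - s) = cc * E" using s_lt_cc cc_lt1 by (simp add: p_def)

definition sg where "sg = sqrt (1 - p)"
lemma sg_pos: "sg > 0" using p1 by (simp add: sg_def)
lemma sg_sq: "sg^2 = 1 - p" using p1 by (simp add: sg_def)

definition kk where "kk = (1 - sg) / E"
definition kk' where "kk' = kk / sg"
lemma kkE: "kk * E = 1 - sg" using E_pos by (simp add: kk_def)

definition W where "W = rk (- kk)"
definition Winv where "Winv = rk kk'"

lemma W_Winv: "W (Winv x) = x"
proof -
  have "- kk + kk' + - kk * kk' * E = kk' * (1 - kk * E) - kk" by (simp add: algebra_simps)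
  also have "\<dots> = 0" unfolding kkE using sg_pos by (simp add: kk'_def)
  finally have "- kk + kk' + - kk * kk' * E = 0" .
  then show ?thesis by (simp add: W_def Winv_def rk_comp rk_0)
qed

lemma Winv_W: "Winv (W x) = x"
proof -
  have "kk' + - kk + kk' * - kk * E = kk' * (1 - kk * E) - kk" by (simp add: algebra_simps)
  also have "\<dots> = 0" unfolding kkE using sg_pos by (simp add: kk'_def)
  finally have "kk' + - kk + kk' * - kk * E = 0" .
  then show ?thesis by (simp add: W_def Winv_def rk_comp rk_0)
qed

lemma WW: "W (W x) = rk (- (p / E)) x"
proof -
  have "(- kk + - kk + - kk * - kk * E) * E = - p"
  proof -
    have "(- kk + - kk + - kk * - kk * E) * E = - 2 * (kk * E) + (kk * E)^2"
      by (simp add: algebra_simps power2_eq_square)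
    also have "\<dots> = sg^2 - 1" unfolding kkE by (simp add: power2_eq_square algebra_simps)
    finally show ?thesis using sg_sq by simp
  qed
  then have "- kk + - kk + - kk * - kk * E = - (p / E)" using E_pos by (simp add: field_simps)
  then show ?thesis by (simp add: W_def rk_comp)
qed

lemma Sadj_rk_S: "Sadj (rk (- (p / E)) (S z)) = rk (- (p / E)) z"
proof -
  have "Sadj (rk (- (p / E)) (S z))
      = Sadj (S z) + cscale (complex_of_real (- (p / E)) * (cnj mu * cinner e z)) (Sadj e)"
    by (simp add: rk_def Sadj_add Sadj_cscale eS)
  also have "\<dots> = H z + cscale (complex_of_real (- (p / E) * s) * cinner e z) e"
  proof -
    have "complex_of_real (- (p / E)) * (cnj mu * cinner e z) * mu
        = complex_of_real (- (p / E) * s) * cinner e z"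
    proof -
      have "cnj mu * mu = complex_of_real s" unfolding s_def using mod_sq[of mu] by (simp add: mult.commute)
      have "complex_of_real (- (p / E)) * (cnj mu * cinner e z) * mu
          = complex_of_real (- (p / E)) * (cnj mu * mu) * cinner e z"
        by (simp only: mult.assoc mult.commute mult.left_commute)
      also have "\<dots> = complex_of_real (- (p / E) * s) * cinner e z"
        unfolding \<open>cnj mu * mu = complex_of_real s\<close> of_real_mult ..
      finally show ?thesis .
    qed
    then show ?thesis by (simp only: SadjS Sadj_e cscale_cscale)
  qed
  also have "\<dots> = rk (- cc + - (p / E) * s) z" unfolding H_def by (rule rk_plus)
  also have "- cc + - (p / E) * s = - (p / E)"
  proof -
    have h: "cc * E + p * s = p" using p_eq by (simp add: algebra_simps)
    have "- cc + - (p / E) * s = - (cc * E + p * s) / E" using E_pos by (simp add: field_simps)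
    then show ?thesis using h by simp
  qed
  finally show ?thesis .
qed

definition V where "V x = W (S (Winv x))"
definition Vs where "Vs y = Winv (Sadj (W y))"

lemma W_add: "W (x + y) = W x + W y" by (simp add: W_def rk_add)
lemma W_cscale: "W (cscale c x) = cscale c (W x)" by (simp add: W_def rk_cscale)
lemma Winv_add: "Winv (x + y) = Winv x + Winv y" by (simp add: Winv_def rk_add)
lemma Winv_cscale: "Winv (cscale c x) = cscale c (Winv x)" by (simp add: Winv_def rk_cscale)

lemma V_add: "V (x + y) = V x + V y" by (simp add: V_def W_add S_add Winv_add)
lemma V_cscale: "V (cscale c x) = cscale c (V x)" by (simp add: V_def W_cscale S_cscale Winv_cscale)
lemma Vs_add: "Vs (x + y) = Vs x + Vs y" by (simp add: Vs_def W_add Sadj_add Winv_add)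
lemma Vs_cscale: "Vs (cscale c x) = cscale c (Vs x)" by (simp add: Vs_def W_cscale Sadj_cscale Winv_cscale)
lemma V_zero: "V 0 = 0" using V_cscale[of 0 0] by simp
lemma Vs_zero: "Vs 0 = 0" using Vs_cscale[of 0 0] by simp
lemma V_diff: "V (x - y) = V x - V y" using V_add[of "x - y" y] by (simp add: eq_diff_eq)
lemma Vs_diff: "Vs (x - y) = Vs x - Vs y" using Vs_add[of "x - y" y] by (simp add: eq_diff_eq)

lemma V_adj: "cinner (V x) y = cinner x (Vs y)"
  by (simp add: V_def Vs_def W_def Winv_def rk_sa S_adj)

lemma Vs_adj: "cinner (Vs y) x = cinner y (V x)"
proof -
  have "cinner (Vs y) x = cnj (cinner x (Vs y))" by (rule cinner_commute)
  also have "\<dots> = cnj (cinner (V x) y)" by (simp add: V_adj)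
  also have "\<dots> = cinner y (V x)" by (rule cinner_commute[symmetric])
  finally show ?thesis .
qed

lemma VsV: "Vs (V x) = x"
proof -
  have "Vs (V x) = Winv (Sadj (W (W (S (Winv x)))))" by (simp add: V_def Vs_def)
  also have "\<dots> = Winv (rk (- (p / E)) (Winv x))" by (simp add: WW Sadj_rk_S)
  also have "\<dots> = Winv (W (W (Winv x)))" by (simp add: WW)
  also have "\<dots> = x" by (simp add: W_Winv Winv_W)
  finally show ?thesis .
qed

definition Q where "Q z = z - V (Vs z)"

lemma Q_add: "Q (x + y) = Q x + Q y" by (simp add: Q_def V_add Vs_add algebra_simps)
lemma Q_cscale: "Q (cscale c x) = cscale c (Q x)" by (simp add: Q_def V_cscale Vs_cscale cscale_diff_right)
lemma Q_zero: "Q 0 = 0" by (simp add: Q_def V_zero Vs_zero)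
lemma VsQ: "Vs (Q z) = 0" by (simp add: Q_def Vs_diff VsV)
lemma QV: "Q (V z) = 0" by (simp add: Q_def VsV)
lemma QQ: "Q (Q z) = Q z" by (simp add: Q_def[of "Q z"] VsQ V_zero)

lemma L1: "cinner (V x + Q y) a + cinner (Vs y) b = cinner x (Vs a) + cinner y (Q a + V b)"
  by (simp add: Q_def cinner_add_left cinner_add_right cinner_diff_left cinner_diff_right
      V_adj Vs_adj)

lemma L2a: "Vs (V x + Q y) = x" by (simp add: Vs_add VsV VsQ)
lemma L2b: "Q (V x + Q y) + V (Vs y) = y" by (simp add: Q_add QV QQ) (simp add: Q_def)
lemma L3a: "V (Vs a) + Q (Q a + V b) = a" by (simp add: Q_add QV QQ) (simp add: Q_def)
lemma L3b: "Vs (Q a + V b) = b" by (simp add: Vs_add VsV VsQ)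

end


lemma sum3: "sum F {..<3::nat} = F 0 + F 1 + F 2"
proof -
  have "{..<3::nat} = {0, 1, 2}" by auto
  then show ?thesis by (simp add: add.assoc)
qed

lemma fs_suminf:
  fixes F :: "nat \<Rightarrow> 'b::{comm_monoid_add,t2_space}"
  assumes "\<And>n. n \<ge> 3 \<Longrightarrow> F n = 0"
  shows "suminf F = F 0 + F 1 + F 2"
proof -
  have "suminf F = sum F {..<3}" by (rule suminf_finite) (use assms in auto)
  then show ?thesis by (simp add: sum3)
qed

lemma fs_l2:
  fixes f :: "nat \<Rightarrow> 'a::complex_inner"
  assumes "\<And>n. n \<ge> 3 \<Longrightarrow> f n = 0"
  shows "f \<in> l2"
  unfolding l2_def mem_Collect_eq by (rule summable_finite[of "{..<3}"]) (use assms in auto)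

context cstr begin

definition tau where "tau = sqrt p / E"

definition J :: "'a \<Rightarrow> nat \<Rightarrow> 'a" where
  "J x = (\<lambda>n. if n = 0 then W x else if n = 2 then cscale (complex_of_real tau * cinner e x) e else 0)"

definition NN :: "(nat \<Rightarrow> 'a) \<Rightarrow> nat \<Rightarrow> 'a" where
  "NN f = (\<lambda>n. if n = 0 then V (f 0) + Q (f 1) else if n = 1 then Vs (f 1)
     else if n = 2 then cscale (cnj mu) (f 2) else 0)"

definition MM :: "(nat \<Rightarrow> 'a) \<Rightarrow> nat \<Rightarrow> 'a" where
  "MM g = (\<lambda>n. if n = 0 then Vs (g 0) else if n = 1 then Q (g 0) + V (g 1)
     else if n = 2 then cscale mu (g 2) else 0)"

lemma NN_fs: "n \<ge> 3 \<Longrightarrow> NN f n = 0" by (simp add: NN_def)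
lemma MM_fs: "n \<ge> 3 \<Longrightarrow> MM f n = 0" by (simp add: MM_def)
lemma J_fs: "n \<ge> 3 \<Longrightarrow> J x n = 0" by (simp add: J_def)

lemma NN_norm:
  "(norm (NN f 0))^2 + (norm (NN f 1))^2 + (norm (NN f 2))^2
     \<le> (norm (f 0))^2 + (norm (f 1))^2 + (norm (f 2))^2"
proof -
  define a where "a = V (f 0) + Q (f 1)"
  define b where "b = Vs (f 1)"
  have "cinner a a + cinner b b = cinner (f 0) (Vs a) + cinner (f 1) (Q a + V b)"
    unfolding a_def b_def by (rule L1)
  also have "\<dots> = cinner (f 0) (f 0) + cinner (f 1) (f 1)"
    by (simp add: a_def b_def L2a L2b)
  finally have "Re (cinner a a) + Re (cinner b b) = Re (cinner (f 0) (f 0)) + Re (cinner (f 1) (f 1))"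
    by (metis plus_complex.sel(1))
  then have 1: "(norm a)^2 + (norm b)^2 = (norm (f 0))^2 + (norm (f 1))^2"
    by (simp only: norm_sq_Re)
  have "norm (NN f 2) = cmod mu * norm (f 2)" by (simp add: NN_def norm_cscale)
  also have "\<dots> \<le> norm (f 2)" using mu_le by (simp add: mult_left_le_one_le)
  finally have 2: "(norm (NN f 2))^2 \<le> (norm (f 2))^2" by (rule power_mono) simp
  have "NN f 0 = a" "NN f 1 = b" by (simp_all add: NN_def a_def b_def)
  then show ?thesis using 1 2 by simp
qed

lemma l2inner_fs:
  assumes "\<And>n. n \<ge> 3 \<Longrightarrow> f n = 0"
  shows "l2inner f g = cinner (f 0) (g 0) + cinner (f 1) (g 1) + cinner (f 2) (g 2)"
  unfolding l2inner_def by (rule fs_suminf) (simp add: assms)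

lemma l2inner_fs2:
  assumes "\<And>n. n \<ge> 3 \<Longrightarrow> g n = 0"
  shows "l2inner f g = cinner (f 0) (g 0) + cinner (f 1) (g 1) + cinner (f 2) (g 2)"
  unfolding l2inner_def by (rule fs_suminf) (simp add: assms)

lemma normal_NN: "normal_l2 NN"
  unfolding normal_l2_def
proof (intro conjI ballI allI)
  show "NN f \<in> l2" for f by (rule fs_l2) (rule NN_fs)
  show "NN (\<lambda>n. f n + g n) = (\<lambda>n. NN f n + NN g n)" for f g
    by (rule ext) (simp add: NN_def V_add Q_add Vs_add cscale_add_right algebra_simps)
  show "NN (\<lambda>n. cscale c (f n)) = (\<lambda>n. cscale c (NN f n))" for f c
    by (rule ext) (simp add: NN_def V_cscale Q_cscale Vs_cscale cscale_add_right cscale_cscale mult.commute)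
  show "\<exists>K. \<forall>f\<in>l2. l2norm (NN f) \<le> K * l2norm f"
  proof (intro exI ballI)
    fix f :: "nat \<Rightarrow> 'a" assume f: "f \<in> l2"
    have sf: "summable (\<lambda>n. (norm (f n))^2)" using f by (simp add: l2_def)
    have "(\<Sum>n. (norm (NN f n))^2) = (norm (NN f 0))^2 + (norm (NN f 1))^2 + (norm (NN f 2))^2"
      by (rule fs_suminf) (simp add: NN_fs)
    also have "\<dots> \<le> (norm (f 0))^2 + (norm (f 1))^2 + (norm (f 2))^2" by (rule NN_norm)
    also have "\<dots> = (\<Sum>n<3. (norm (f n))^2)" by (simp add: sum3)
    also have "\<dots> \<le> (\<Sum>n. (norm (f n))^2)" by (rule sum_le_suminf[OF sf]) auto
    finally show "l2norm (NN f) \<le> 1 * l2norm f" by (simp add: l2norm_def)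
  qed
  show "\<exists>M. (\<forall>g\<in>l2. M g \<in> l2) \<and> (\<forall>f\<in>l2. \<forall>g\<in>l2. l2inner (NN f) g = l2inner f (M g)) \<and>
         (\<forall>f\<in>l2. M (NN f) = NN (M f))"
  proof (intro exI[of _ MM] conjI ballI)
    show "MM g \<in> l2" for g by (rule fs_l2) (rule MM_fs)
    show "l2inner (NN f) g = l2inner f (MM g)" for f g
    proof -
      have "l2inner (NN f) g = (cinner (V (f 0) + Q (f 1)) (g 0) + cinner (Vs (f 1)) (g 1))
              + cinner (cscale (cnj mu) (f 2)) (g 2)"
        by (subst l2inner_fs) (simp_all add: NN_fs, simp add: NN_def)
      also have "\<dots> = (cinner (f 0) (Vs (g 0)) + cinner (f 1) (Q (g 0) + V (g 1)))
              + cinner (f 2) (cscale mu (g 2))"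
        by (simp only: L1 cinner_cscale_left cinner_cscale_right complex_cnj_cnj)
      also have "\<dots> = l2inner f (MM g)"
        by (subst l2inner_fs2[of "MM g"]) (simp_all add: MM_fs, simp add: MM_def)
      finally show ?thesis .
    qed
    show "MM (NN f) = NN (MM f)" for f
      by (rule ext) (simp add: MM_def NN_def L2a L2b L3a L3b cscale_cscale mult.commute)
  qed
qed

lemma tau_sq: "complex_of_real tau * complex_of_real tau * complex_of_real E = complex_of_real (p / E)"
proof -
  have "tau * tau * E = p / E" using p0 E_pos by (simp add: tau_def power2_eq_square[symmetric] field_simps)
  then show ?thesis by (simp flip: of_real_mult)
qed

lemma subn: "subnormal (cauchy_dual T)"
  unfolding subnormal_def cauchy_S
proof (intro exI[of _ NN] exI[of _ J] conjI allI)
  show "normal_l2 NN" by (rule normal_NN)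
  show "J x \<in> l2" for x by (rule fs_l2) (rule J_fs)
  show "J (x + y) = (\<lambda>n. J x n + J y n)" for x y
    by (rule ext) (simp add: J_def W_add cinner_add_right distrib_left cscale_add_left)
  show "J (cscale c x) = (\<lambda>n. cscale c (J x n))" for c x
    by (rule ext) (simp add: J_def W_cscale cinner_cscale_right cscale_cscale ac_simps)
  show "l2inner (J x) (J y) = cinner x y" for x y
  proof -
    have WWi: "cinner (W x) (W y) = cinner x y - complex_of_real (p / E) * cinner e y * cinner x e"
    proof -
      have "cinner (W x) (W y) = cinner x (W (W y))" unfolding W_def by (rule rk_sa)
      also have "\<dots> = cinner x (rk (- (p / E)) y)" by (simp only: WW)
      also have "\<dots> = cinner x y - complex_of_real (p / E) * cinner e y * cinner x e"
        by (simp add: rk_def cinner_add_right cinner_cscale_right)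
      finally show ?thesis .
    qed
    have "l2inner (J x) (J y) = cinner (W x) (W y)
        + cinner (cscale (complex_of_real tau * cinner e x) e) (cscale (complex_of_real tau * cinner e y) e)"
      by (subst l2inner_fs) (simp_all add: J_fs, simp add: J_def)
    also have "cinner (W x) (W y) = cinner x y - complex_of_real (p / E) * cinner e y * cinner x e"
      by (rule WWi)
    also have "cinner (cscale (complex_of_real tau * cinner e x) e) (cscale (complex_of_real tau * cinner e y) e)
        = (complex_of_real tau * complex_of_real tau * complex_of_real E) * cinner e y * cinner x e"
      by (simp add: cinner_cscale_left cinner_cscale_right cee cxe[of x] ac_simps)
    finally show ?thesis by (simp add: tau_sq)
  qed
  show "NN (J x) = J (S x)" for x
    by (rule ext) (simp add: NN_def J_def V_def Winv_W Q_zero Vs_zero cscale_cscale eS ac_simps)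
qed

end

theorem corollary3p6:
  fixes T :: "'a::chilbert \<Rightarrow> 'a"
  assumes "bounded_clinear T"
    and "concave_op T"
    and "rank_one (Delta T)"
  shows "Delta_regular T \<and> completely_hyperexpansive T \<and>
         subnormal (cauchy_dual T) \<and> contraction (cauchy_dual T)"
proof -
  obtain e where e: "e \<noteq> 0" "\<And>x. Delta T x = cscale (cinner e x) e"
    using structure_e[OF assms] by blast
  interpret cstr T e using assms e by unfold_locales auto
  show ?thesis using regular compl_hyper subn contr by blast
qed


end
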